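(* Let $n\ge1$ and let $f\in\mathcal{G}_1$ be $n$-ary, $f=2x_1\cdots x_n\left(\sum_{i=1}^n a_ix_i^2+\sum_{i=1}^n b_ix_i+c\right)$, with $a_i\neq 0$ for some $i$. Then $2w_n\in C(f)$ or $2q_n\in C(f)$, where $w_n=x_1\cdots x_n(x_1^2+1)$ and $q_n=x_1^3x_2\cdots x_n$.
   Context: All operations are on $\mathbb{Z}_8$. $\mathcal{G}_1$ is the set of all operations (of any arity $n\ge1$) of the form $2x_1\cdots x_n\left(\sum_{i=1}^n a_ix_i^2+\sum_{i=1}^n b_ix_i+c\right)$ with $a_i,b_i\in\{0,1\}$ and $c\in\{0,1,2,3\}$. For an operation $f$, $C(f)$ denotes the clone generated by $f$ together with binary addition and all unary constant operations. *)

theory Defs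
  imports Main "HOL-Library.Numeral_Type"
begin

text \<open>Operations on Z_8 (the type 8 from Numeral_Type).  An n-ary operation is
represented as a pair (n, f) with f :: (nat => 8) => 8, where only the arguments
x 0, ..., x (n-1) are meant to matter.\<close>

type_synonym op8 = "nat \<times> ((nat \<Rightarrow> 8) \<Rightarrow> 8)"

inductive_set clone_gen :: "op8 set \<Rightarrow> op8 set" for F :: "op8 set" where
  proj: "i < n \<Longrightarrow> (n, \<lambda>x. x i) \<in> clone_gen F"
| gen: "p \<in> F \<Longrightarrow> p \<in> clone_gen F"
| comp: "(m, g) \<in> clone_gen F \<Longrightarrow> (\<forall>j<m. (n, hs j) \<in> clone_gen F)
          \<Longrightarrow> (n, \<lambda>x. g (\<lambda>j. hs j x)) \<in> clone_gen F"

definition C :: "op8 \<Rightarrow> op8 set" where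
  "C f = clone_gen ({f, (2, \<lambda>x. x 0 + x 1)} \<union> {(1, \<lambda>x. c) | c. True})"

text \<open>Members of G_1 (indices 0-based).\<close>

definition G1_op :: "nat \<Rightarrow> (nat \<Rightarrow> 8) \<Rightarrow> (nat \<Rightarrow> 8) \<Rightarrow> 8 \<Rightarrow> op8" where
  "G1_op n a b c = (n, \<lambda>x. 2 * (\<Prod>i<n. x i) *
       ((\<Sum>i<n. a i * (x i)^2) + (\<Sum>i<n. b i * x i) + c))"

definition w_op :: "nat \<Rightarrow> (nat \<Rightarrow> 8) \<Rightarrow> 8" where
  "w_op n x = (\<Prod>i<n. x i) * ((x 0)^2 + 1)"

definition q_op :: "nat \<Rightarrow> (nat \<Rightarrow> 8) \<Rightarrow> 8" where
  "q_op n x = (x 0)^3 * (\<Prod>i\<in>{1..<n}. x i)"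

end

theory Submission
  imports Defs
begin

lemma all8: "(x::8) = 0 \<or> x = 1 \<or> x = 2 \<or> x = 3 \<or> x = 4 \<or> x = 5 \<or> x = 6 \<or> x = 7"
proof (cases x rule: bit0_cases)
  case (of_int z)
  then have "z = 0 \<or> z = 1 \<or> z = 2 \<or> z = 3 \<or> z = 4 \<or> z = 5 \<or> z = 6 \<or> z = 7" by auto
  then show ?thesis using of_int by auto
qed

lemma E1: "4*(x::8)*x = 4*x" using all8[of x] by auto
lemma E12: "12*((x::8)*x) = 4*x" using all8[of x] by auto

lemma core2:
  assumes "bj \<in> {0,1::8}"
  shows "2*xi*xj*((3*xi+3) + (3*xj+3+2*bj) + (3*xi^2+3*xi*xj+2*bj*xi)) = 2*xi*xj*(xi^2+(1::8))"
  using assms all8[of xi] all8[of xj] by auto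

definition pr :: "nat \<Rightarrow> (nat \<Rightarrow> 8) \<Rightarrow> 8" where "pr n x = (\<Prod>i<n. x i)"
definition Rm :: "nat \<Rightarrow> nat \<Rightarrow> (nat \<Rightarrow> 8) \<Rightarrow> 8" where "Rm n i x = (\<Prod>j\<in>{..<n}-{i}. x j)"
definition fG :: "nat \<Rightarrow> (nat \<Rightarrow> 8) \<Rightarrow> (nat \<Rightarrow> 8) \<Rightarrow> 8 \<Rightarrow> (nat \<Rightarrow> 8) \<Rightarrow> 8" where
  "fG n a b c x = 2 * pr n x * ((\<Sum>i<n. a i * (x i)^2) + (\<Sum>i<n. b i * x i) + c)"
definition Tm :: "nat \<Rightarrow> (nat \<Rightarrow> 8) \<Rightarrow> (nat \<Rightarrow> 8) \<Rightarrow> 8 \<Rightarrow> nat \<Rightarrow> (nat \<Rightarrow> 8) \<Rightarrow> 8" where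
  "Tm n a b c i x = (\<Sum>j\<in>{..<n}-{i}. a j * (x j)^2) + (\<Sum>j\<in>{..<n}-{i}. b j * x j) + c"

lemma G1_eq: "G1_op n a b c = (n, fG n a b c)"
  unfolding G1_op_def fG_def pr_def by simp

lemma pr_split: "i < n \<Longrightarrow> pr n x = x i * Rm n i x"
  unfolding pr_def Rm_def by (simp add: prod.remove)

lemma Rm_split: "i < n \<Longrightarrow> j < n \<Longrightarrow> i \<noteq> j \<Longrightarrow> Rm n i x = x j * (\<Prod>l\<in>{..<n}-{i}-{j}. x l)"
  unfolding Rm_def by (subst prod.remove[of _ j]) auto

lemma fG_split:
  assumes "i < n"
  shows "fG n a b c x = 2 * x i * Rm n i x * (a i * (x i)^2 + b i * x i + Tm n a b c i x)"
proof -
  have s1: "(\<Sum>j<n. a j * (x j)^2) = a i * (x i)^2 + (\<Sum>j\<in>{..<n}-{i}. a j * (x j)^2)"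
    using assms by (simp add: sum.remove)
  have s2: "(\<Sum>j<n. b j * x j) = b i * x i + (\<Sum>j\<in>{..<n}-{i}. b j * x j)"
    using assms by (simp add: sum.remove)
  show ?thesis unfolding fG_def Tm_def s1 s2 pr_split[OF assms]
    by (simp add: algebra_simps)
qed

lemma Rm_upd: "Rm n i (x(i:=v)) = Rm n i x"
  unfolding Rm_def by (rule prod.cong) auto

lemma Tm_upd: "Tm n a b c i (x(i:=v)) = Tm n a b c i x"
  unfolding Tm_def by (auto intro!: sum.cong)

lemma pr_upd: "i < n \<Longrightarrow> pr n (x(i:=v)) = v * Rm n i x"
  by (simp add: pr_split Rm_upd)

lemma fG_upd: "i < n \<Longrightarrow> fG n a b c (x(i:=v)) = 2 * v * Rm n i x * (a i * v^2 + b i * v + Tm n a b c i x)"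
  by (simp add: fG_split Rm_upd Tm_upd)

lemma P4: "l < n \<Longrightarrow> 4 * pr n x * x l = 4 * pr n x"
proof -
  assume "l < n"
  then have "4 * pr n x * x l = (4 * x l * x l) * Rm n l x" by (simp add: pr_split algebra_simps)
  also have "\<dots> = 4 * x l * Rm n l x" by (simp only: E1)
  also have "\<dots> = 4 * pr n x" using \<open>l < n\<close> by (simp add: pr_split algebra_simps)
  finally show ?thesis .
qed

lemma C_comp: "(m,g) \<in> C f \<Longrightarrow> (\<forall>j<m. (n, hs j) \<in> C f) \<Longrightarrow> (n, \<lambda>x. g (\<lambda>j. hs j x)) \<in> C f"
  unfolding C_def by (rule clone_gen.comp)

lemma C_proj: "i < n \<Longrightarrow> (n, \<lambda>x. x i) \<in> C f"
  unfolding C_def by (rule clone_gen.proj)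

lemma C_eq: "(n,F) \<in> C f \<Longrightarrow> (\<And>x. F x = H x) \<Longrightarrow> (n,H) \<in> C f"
proof -
  assume "(n,F) \<in> C f" "\<And>x. F x = H x"
  moreover have "F = H" using \<open>\<And>x. F x = H x\<close> by (rule ext)
  ultimately show ?thesis by simp
qed

lemma C_add:
  assumes "(n,F) \<in> C f" "(n,H) \<in> C f"
  shows "(n, \<lambda>x. F x + H x) \<in> C f"
proof -
  have g: "(2, \<lambda>x. x 0 + x 1) \<in> C f" unfolding C_def by (rule clone_gen.gen) simp
  have hs: "\<forall>j::nat<2. (n, (\<lambda>j::nat. if j = 0 then F else H) j) \<in> C f"
    using assms by (auto simp: less_2_cases_iff)
  have "(n, \<lambda>x. (\<lambda>x. x 0 + x 1) (\<lambda>j. (\<lambda>j::nat. if j = 0 then F else H) j x)) \<in> C f"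
    by (rule C_comp[OF g hs])
  then show ?thesis by (simp del: One_nat_def)
qed

lemma C_const:
  assumes "0 < n" shows "(n, \<lambda>x. k) \<in> C f"
proof -
  have g: "(1, \<lambda>x. k) \<in> C f" unfolding C_def by (rule clone_gen.gen) auto
  have hs: "\<forall>j<1. (n, (\<lambda>j. \<lambda>x. x 0) j) \<in> C f" using assms by (auto intro: C_proj)
  have "(n, \<lambda>x. (\<lambda>x. k) (\<lambda>j. (\<lambda>j. \<lambda>x. x 0) j x)) \<in> C f"
    by (rule C_comp[OF g hs])
  then show ?thesis by simp
qed

lemma C_scal_nat:
  assumes "0 < n" "(n,F) \<in> C f"
  shows "(n, \<lambda>x. of_nat k * F x) \<in> C f"
proof (induction k)
  case 0
  then show ?case using C_const[OF assms(1), of 0 f] by simp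
next
  case (Suc k)
  have "(n, \<lambda>x. of_nat k * F x + F x) \<in> C f" by (rule C_add[OF Suc assms(2)])
  then show ?case by (simp add: algebra_simps)
qed

lemma of_nat8: "\<exists>m. (k::8) = of_nat m"
proof -
  have "k = of_nat 0 \<or> k = of_nat 1 \<or> k = of_nat 2 \<or> k = of_nat 3 \<or> k = of_nat 4 \<or> k = of_nat 5 \<or> k = of_nat 6 \<or> k = of_nat 7"
    using all8[of k] by simp
  then show ?thesis by blast
qed

lemma C_scal:
  assumes "0 < n" "(n,F) \<in> C f"
  shows "(n, \<lambda>x. k * F x) \<in> C f"
proof -
  obtain m where "k = of_nat m" using of_nat8 by blast
  then show ?thesis using C_scal_nat[OF assms, of m] by simp
qed

lemma C_sub:
  assumes "0 < n" "(n,F) \<in> C f" "(n,H) \<in> C f"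
  shows "(n, \<lambda>x. F x - H x) \<in> C f"
proof -
  have "(n, \<lambda>x. F x + (-1) * H x) \<in> C f"
    by (rule C_add[OF assms(2) C_scal[OF assms(1) assms(3)]])
  then show ?thesis by simp
qed

lemma C_sum:
  fixes N :: nat
  assumes "0 < n" "\<forall>l<N. (n, F l) \<in> C f"
  shows "(n, \<lambda>x. \<Sum>l<N. F l x) \<in> C f"
  using assms(2)
proof (induction N)
  case 0
  then show ?case using C_const[OF assms(1), of 0 f] by simp
next
  case (Suc N)
  have "(n, \<lambda>x. (\<Sum>l<N. F l x) + F N x) \<in> C f"
    by (rule C_add) (use Suc in auto)
  then show ?case by simp
qed

lemma C_upd:
  assumes "(n,F) \<in> C f" "i < n" "(n,h) \<in> C f"
  shows "(n, \<lambda>x. F (x(i := h x))) \<in> C f"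
proof -
  have hs: "\<forall>j<n. (n, (\<lambda>l. if l = i then h else (\<lambda>x. x l)) j) \<in> C f"
    using assms by (auto intro: C_proj)
  have "(n, \<lambda>x. F (\<lambda>j. (\<lambda>l. if l = i then h else (\<lambda>x. x l)) j x)) \<in> C f"
    by (rule C_comp[OF assms(1) hs])
  moreover have "\<And>x. (\<lambda>j. (\<lambda>l. if l = i then h else (\<lambda>x. x l)) j x) = x(i := h x)"
    by (auto simp: fun_eq_iff)
  ultimately show ?thesis by simp
qed

lemma C_perm:
  assumes "(n,F) \<in> C f" "\<forall>l<n. \<sigma> l < n"
  shows "(n, \<lambda>x. F (\<lambda>l. x (\<sigma> l))) \<in> C f"
proof -
  have hs: "\<forall>j<n. (n, (\<lambda>l. \<lambda>x. x (\<sigma> l)) j) \<in> C f"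
    using assms by (auto intro: C_proj)
  show ?thesis using C_comp[OF assms(1) hs] by simp
qed

definition sw :: "nat \<Rightarrow> nat \<Rightarrow> nat \<Rightarrow> nat" where
  "sw i l j = (if j = i then l else if j = l then i else j)"

lemma pr_sw: "i < n \<Longrightarrow> l < n \<Longrightarrow> pr n (\<lambda>j. x (sw i l j)) = pr n x"
  unfolding pr_def
  by (rule prod.reindex_bij_witness[of _ "sw i l" "sw i l"]) (auto simp: sw_def)

lemma C_swapP:
  assumes "(n, \<lambda>x. 2 * pr n x * h (x i)) \<in> C f" "i < n" "l < n"
  shows "(n, \<lambda>x. 2 * pr n x * h (x l)) \<in> C f"
proof -
  have "\<forall>j<n. sw i l j < n" using assms by (auto simp: sw_def)
  from C_perm[OF assms(1) this]
  have "(n, \<lambda>x. 2 * pr n (\<lambda>j. x (sw i l j)) * h (x (sw i l i))) \<in> C f" by simp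
  then show ?thesis
    by (rule C_eq) (simp only: pr_sw[OF assms(2,3)], simp add: sw_def)
qed

lemma C_fG: "(n, fG n a b c) \<in> C (G1_op n a b c)"
  unfolding C_def G1_eq[symmetric] by (rule clone_gen.gen) simp

lemma C_Gi:
  assumes "0 < n" "i < n"
  shows "(n, \<lambda>x. 2 * pr n x * (3 * a i * x i + 3 * a i + 2 * b i)) \<in> C (G1_op n a b c)"
proof -
  let ?K = "C (G1_op n a b c)"
  have h1: "(n, \<lambda>x. x i + 1) \<in> ?K" by (rule C_add[OF C_proj[OF assms(2)] C_const[OF assms(1)]])
  have F1: "(n, \<lambda>x. fG n a b c (x(i := x i + 1))) \<in> ?K" by (rule C_upd[OF C_fG assms(2) h1])
  have F2: "(n, \<lambda>x. fG n a b c (x(i := 1))) \<in> ?K" by (rule C_upd[OF C_fG assms(2) C_const[OF assms(1)]])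
  have "(n, \<lambda>x. fG n a b c (x(i := x i + 1)) - fG n a b c (x(i := 1)) - fG n a b c x) \<in> ?K"
    by (rule C_sub[OF assms(1) C_sub[OF assms(1) F1 F2] C_fG])
  then show ?thesis
  proof (rule C_eq)
    fix x
    show "fG n a b c (x(i := x i + 1)) - fG n a b c (x(i := 1)) - fG n a b c x =
      2 * pr n x * (3 * a i * x i + 3 * a i + 2 * b i)"
      unfolding fG_upd[OF assms(2)] fG_split[OF assms(2), of a b c x] pr_split[OF assms(2)]
      by (simp add: algebra_simps power2_eq_square)
  qed
qed

lemma C_N:
  assumes "0 < n" "i < n" "j < n" "i \<noteq> j"
  shows "(n, \<lambda>x. 2 * pr n x * (3 * a j * (x i)^2 + 3 * a j * x i * x j + 2 * b j * x i)) \<in> C (G1_op n a b c)"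
proof -
  let ?K = "C (G1_op n a b c)"
  have h1: "(n, \<lambda>x. x j + x i) \<in> ?K" by (rule C_add[OF C_proj[OF assms(3)] C_proj[OF assms(2)]])
  have F1: "(n, \<lambda>x. fG n a b c (x(j := x j + x i))) \<in> ?K" by (rule C_upd[OF C_fG assms(3) h1])
  have F2: "(n, \<lambda>x. fG n a b c (x(j := x i))) \<in> ?K" by (rule C_upd[OF C_fG assms(3) C_proj[OF assms(2)]])
  have "(n, \<lambda>x. fG n a b c (x(j := x j + x i)) - fG n a b c (x(j := x i)) - fG n a b c x) \<in> ?K"
    by (rule C_sub[OF assms(1) C_sub[OF assms(1) F1 F2] C_fG])
  then show ?thesis
  proof (rule C_eq)
    fix x
    show "fG n a b c (x(j := x j + x i)) - fG n a b c (x(j := x i)) - fG n a b c x =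
      2 * pr n x * (3 * a j * (x i)^2 + 3 * a j * x i * x j + 2 * b j * x i)"
      unfolding fG_upd[OF assms(3)] fG_split[OF assms(3), of a b c x] pr_split[OF assms(3)]
      by (simp add: algebra_simps power2_eq_square)
  qed
qed

lemma C_A:
  assumes "0 < n" "i < n" "a i = 1"
  shows "(n, \<lambda>x. 4 * pr n x) \<in> C (G1_op n a b c)"
proof -
  let ?K = "C (G1_op n a b c)"
  have G: "(n, \<lambda>x. 2 * pr n x * (3 * x i + 3 + 2 * b i)) \<in> ?K"
    using C_Gi[OF assms(1,2), of a b c] assms(3) by simp
  have h: "(n, \<lambda>x. - x i) \<in> ?K"
    using C_scal[OF assms(1) C_proj[OF assms(2)], of "-1"] by simp
  have G': "(n, \<lambda>x. 2 * pr n (x(i := - x i)) * (3 * (x(i := - x i)) i + 3 + 2 * b i)) \<in> ?K"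
    using C_upd[OF G assms(2) h] by simp
  have "(n, \<lambda>x. 2 * pr n x * (3 * x i + 3 + 2 * b i) + 2 * pr n (x(i := - x i)) * (3 * (x(i := - x i)) i + 3 + 2 * b i)) \<in> ?K"
    by (rule C_add[OF G G'])
  then show ?thesis
  proof (rule C_eq)
    fix x
    have "2 * pr n x * (3 * x i + 3 + 2 * b i) + 2 * pr n (x(i := - x i)) * (3 * (x(i := - x i)) i + 3 + 2 * b i)
        = 12 * (x i * x i) * Rm n i x"
      unfolding pr_upd[OF assms(2)] pr_split[OF assms(2)] by (simp add: algebra_simps Rm_upd)
    also have "\<dots> = 4 * pr n x" unfolding E12 pr_split[OF assms(2)] by (simp add: algebra_simps)
    finally show "2 * pr n x * (3 * x i + 3 + 2 * b i) + 2 * pr n (x(i := - x i)) * (3 * (x(i := - x i)) i + 3 + 2 * b i) = 4 * pr n x" .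
  qed
qed

lemma pr0: "0 < n \<Longrightarrow> pr n x = x 0 * (\<Prod>i\<in>{1..<n}. x i)"
  unfolding pr_def lessThan_atLeast0 by (simp add: prod.atLeast_Suc_lessThan)

lemma final:
  assumes "0 < n" "i < n"
    and F: "(n, \<lambda>x. 2 * pr n x * ((x i)^2 + t)) \<in> C f"
    and A: "(n, \<lambda>x. 4 * pr n x) \<in> C f"
  shows "(n, \<lambda>x. 2 * w_op n x) \<in> C f \<or> (n, \<lambda>x. 2 * q_op n x) \<in> C f"
proof -
  have F0: "(n, \<lambda>x. 2 * pr n x * ((x 0)^2 + t)) \<in> C f"
    using C_swapP[where h = "\<lambda>y. y^2 + t", OF _ assms(2) assms(1)] F by simp
  obtain s :: 8 where s: "t = 2 * s \<or> t = 1 + 2 * s"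
  proof -
    have "t = 2 * 0 \<or> t = 1 + 2 * 0 \<or> t = 2 * 1 \<or> t = 1 + 2 * 1 \<or> t = 2 * 2 \<or> t = 1 + 2 * 2 \<or> t = 2 * 3 \<or> t = 1 + 2 * 3"
      using all8[of t] by auto
    then show ?thesis using that by blast
  qed
  have H: "(n, \<lambda>x. 2 * pr n x * ((x 0)^2 + t) + (- s) * (4 * pr n x)) \<in> C f"
    by (rule C_add[OF F0 C_scal[OF assms(1) A]])
  from s show ?thesis
  proof
    assume t: "t = 2 * s"
    have "(n, \<lambda>x. 2 * q_op n x) \<in> C f"
      using H proof (rule C_eq)
      fix x show "2 * pr n x * ((x 0)^2 + t) + (- s) * (4 * pr n x) = 2 * q_op n x"
        unfolding q_op_def pr0[OF assms(1)] t by (simp add: algebra_simps power2_eq_square power3_eq_cube)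
    qed
    then show ?thesis by simp
  next
    assume t: "t = 1 + 2 * s"
    have "(n, \<lambda>x. 2 * w_op n x) \<in> C f"
      using H proof (rule C_eq)
      fix x show "2 * pr n x * ((x 0)^2 + t) + (- s) * (4 * pr n x) = 2 * w_op n x"
        unfolding w_op_def pr_def[symmetric] t by (simp add: algebra_simps)
    qed
    then show ?thesis by simp
  qed
qed


lemma caseP:
  assumes "0 < n" "i < n" "j < n" "i \<noteq> j" "a i = 1" "a j = 1" "b j \<in> {0,1}"
  shows "(n, \<lambda>x. 2 * pr n x * ((x i)^2 + (1 + 2 * b i))) \<in> C (G1_op n a b c)"
proof -
  let ?K = "C (G1_op n a b c)"
  have Gi: "(n, \<lambda>x. 2 * pr n x * (3 * x i + 3 + 2 * b i)) \<in> ?K"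
    using C_Gi[OF assms(1,2), of a b c] assms(5) by simp
  have Gj: "(n, \<lambda>x. 2 * pr n x * (3 * x j + 3 + 2 * b j)) \<in> ?K"
    using C_Gi[OF assms(1,3), of a b c] assms(6) by simp
  have N: "(n, \<lambda>x. 2 * pr n x * (3 * (x i)^2 + 3 * x i * x j + 2 * b j * x i)) \<in> ?K"
    using C_N[OF assms(1,2,3,4), of a b c] assms(6) by simp
  have "(n, \<lambda>x. 2 * pr n x * (3 * x i + 3 + 2 * b i) + 2 * pr n x * (3 * x j + 3 + 2 * b j)
      + 2 * pr n x * (3 * (x i)^2 + 3 * x i * x j + 2 * b j * x i)) \<in> ?K"
    by (rule C_add[OF C_add[OF Gi Gj] N])
  then show ?thesis
  proof (rule C_eq)
    fix x :: "nat \<Rightarrow> 8"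
    define R where "R = (\<Prod>l\<in>{..<n}-{i}-{j}. x l)"
    have pr: "pr n x = x i * (x j * R)"
      unfolding R_def using assms by (simp add: pr_split Rm_split)
    have c: "2*(x i)*(x j)*((3*(x i)+3) + (3*(x j)+3+2*b j) + (3*(x i)^2+3*(x i)*(x j)+2*b j*(x i))) = 2*(x i)*(x j)*((x i)^2+1)"
      by (rule core2[OF assms(7)])
    have "2 * pr n x * (3 * x i + 3 + 2 * b i) + 2 * pr n x * (3 * x j + 3 + 2 * b j)
      + 2 * pr n x * (3 * (x i)^2 + 3 * x i * x j + 2 * b j * x i)
      = R * (2*(x i)*(x j)*((3*(x i)+3) + (3*(x j)+3+2*b j) + (3*(x i)^2+3*(x i)*(x j)+2*b j*(x i))))
        + 2 * pr n x * (2 * b i)"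
      unfolding pr by (simp add: algebra_simps)
    also have "\<dots> = R * (2*(x i)*(x j)*((x i)^2+1)) + 2 * pr n x * (2 * b i)" by (simp only: c)
    also have "\<dots> = 2 * pr n x * ((x i)^2 + (1 + 2 * b i))"
      unfolding pr by (simp add: algebra_simps)
    finally show "2 * pr n x * (3 * x i + 3 + 2 * b i) + 2 * pr n x * (3 * x j + 3 + 2 * b j)
      + 2 * pr n x * (3 * (x i)^2 + 3 * x i * x j + 2 * b j * x i) = 2 * pr n x * ((x i)^2 + (1 + 2 * b i))" .
  qed
qed

lemma caseQ:
  assumes "0 < n" "i < n" "a i = 1" "\<forall>l<n. l \<noteq> i \<longrightarrow> a l = 0"
  shows "(n, \<lambda>x. 2 * pr n x * ((x i)^2 + (c - (5 + 2 * b i) * (\<Sum>l<n. b l)))) \<in> C (G1_op n a b c)"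
proof -
  let ?K = "C (G1_op n a b c)"
  have Gi: "(n, \<lambda>x. 2 * pr n x * (3 * x i + 3 + 2 * b i)) \<in> ?K"
    using C_Gi[OF assms(1,2), of a b c] assms(3) by simp
  have gl: "\<forall>l<n. (n, \<lambda>x. b l * (2 * pr n x * (3 * x l + 3 + 2 * b i))) \<in> ?K"
  proof (intro allI impI)
    fix l assume "l < n"
    have "(n, \<lambda>x. 2 * pr n x * (3 * x l + 3 + 2 * b i)) \<in> ?K"
      using C_swapP[where h = "\<lambda>y. 3 * y + 3 + 2 * b i", OF _ assms(2) \<open>l < n\<close>] Gi by simp
    then show "(n, \<lambda>x. b l * (2 * pr n x * (3 * x l + 3 + 2 * b i))) \<in> ?K"
      by (rule C_scal[OF assms(1)])
  qed
  have S: "(n, \<lambda>x. \<Sum>l<n. b l * (2 * pr n x * (3 * x l + 3 + 2 * b i))) \<in> ?K"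
    by (rule C_sum[OF assms(1) gl])
  have "(n, \<lambda>x. fG n a b c x - (\<Sum>l<n. b l * (2 * pr n x * (3 * x l + 3 + 2 * b i)))) \<in> ?K"
    by (rule C_sub[OF assms(1) C_fG S])
  then show ?thesis
  proof (rule C_eq)
    fix x
    have sa: "(\<Sum>l<n. a l * (x l)^2) = (x i)^2"
    proof -
      have "(\<Sum>l<n. a l * (x l)^2) = (\<Sum>l<n. if l = i then (x i)^2 else 0)"
        using assms(3,4) by (intro sum.cong) auto
      then show ?thesis using assms(2) by simp
    qed
    have tm: "b l * (2 * pr n x * (3 * x l + 3 + 2 * b i)) = 2 * pr n x * (b l * x l) + 2 * pr n x * (b l * (5 + 2 * b i))"
      if "l < n" for l
    proof -
      have "b l * (2 * pr n x * (3 * x l + 3 + 2 * b i)) = 2 * pr n x * (b l * x l) + 2 * pr n x * (b l * (5 + 2 * b i))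
          + b l * (4 * pr n x * x l - 4 * pr n x)"
        by (simp add: algebra_simps)
      then show ?thesis using P4[OF that] by simp
    qed
    have "(\<Sum>l<n. b l * (2 * pr n x * (3 * x l + 3 + 2 * b i)))
        = (\<Sum>l<n. 2 * pr n x * (b l * x l) + 2 * pr n x * (b l * (5 + 2 * b i)))"
      by (rule sum.cong) (simp_all add: tm)
    also have "\<dots> = 2 * pr n x * (\<Sum>l<n. b l * x l) + 2 * pr n x * ((5 + 2 * b i) * (\<Sum>l<n. b l))"
      by (simp add: sum.distrib sum_distrib_left sum_distrib_right algebra_simps)
    finally have ss: "(\<Sum>l<n. b l * (2 * pr n x * (3 * x l + 3 + 2 * b i)))
        = 2 * pr n x * (\<Sum>l<n. b l * x l) + 2 * pr n x * ((5 + 2 * b i) * (\<Sum>l<n. b l))" .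
    show "fG n a b c x - (\<Sum>l<n. b l * (2 * pr n x * (3 * x l + 3 + 2 * b i)))
        = 2 * pr n x * ((x i)^2 + (c - (5 + 2 * b i) * (\<Sum>l<n. b l)))"
      unfolding ss fG_def sa by (simp add: algebra_simps)
  qed
qed

theorem lemma4p4:
  fixes n :: nat and a b :: "nat \<Rightarrow> 8" and c :: 8
  assumes "n \<ge> 1"
    and "\<forall>i<n. a i \<in> {0, 1}" and "\<forall>i<n. b i \<in> {0, 1}"
    and "c \<in> {0, 1, 2, 3}"
    and "\<exists>i<n. a i \<noteq> 0"
  shows "(n, \<lambda>x. 2 * w_op n x) \<in> C (G1_op n a b c)
       \<or> (n, \<lambda>x. 2 * q_op n x) \<in> C (G1_op n a b c)"
proof -
  have n0: "0 < n" using assms(1) by simp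
  obtain i where i: "i < n" "a i \<noteq> 0" using assms(5) by blast
  have ai: "a i = 1" using i assms(2) by auto
  have A: "(n, \<lambda>x. 4 * pr n x) \<in> C (G1_op n a b c)" by (rule C_A[of n i a b c, OF n0 i(1) ai])
  show ?thesis
  proof (cases "\<exists>j<n. j \<noteq> i \<and> a j \<noteq> 0")
    case True
    then obtain j where j: "j < n" "j \<noteq> i" "a j \<noteq> 0" by blast
    have aj: "a j = 1" using j assms(2) by auto
    have bj: "b j \<in> {0,1}" using j assms(3) by auto
    show ?thesis
      by (rule final[OF n0 i(1) caseP[of n i j a b c, OF n0 i(1) j(1) j(2)[symmetric] ai aj bj] A])
  next
    case False
    then have al: "\<forall>l<n. l \<noteq> i \<longrightarrow> a l = 0" by blast
    show ?thesis
      by (rule final[OF n0 i(1) caseQ[of n i a c b, OF n0 i(1) ai al] A])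
  qed
qed

end
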